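(* Consider an ideal gas of $N$ identical particles with single-particle energy eigenvalues $\varepsilon_1,\varepsilon_2,\ldots$ and canonical partition function $Z(\beta,N)=\sum_E\omega(E,N)e^{-\beta E}$. Suppose that $$Z(\beta,N)=m_{(\lambda)^q}\big(e^{-\beta\varepsilon_1},e^{-\beta\varepsilon_2},\ldots\big)+\sum_{I:\ \lambda_{I,1}\le q} M^I\, m_{(\lambda)_I}\big(e^{-\beta\varepsilon_1},e^{-\beta\varepsilon_2},\ldots\big),$$ where $(\lambda)^q$ is an integer partition of $N$ with largest part $\lambda_1=q$, the sum runs over partitions $(\lambda)_I=(\lambda_{I,1},\lambda_{I,2},\ldots)$ of $N$ with largest part $\lambda_{I,1}\le q$, and each $M^I$ is a nonnegative integer. Then the maximum occupation number of the system is $q$.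
   Context: $\omega(E,N)$ denotes the number of microstates with $N$ particles and total energy $E$. The monomial symmetric function of a partition $(\lambda)=(\lambda_1,\ldots,\lambda_l)$ is $m_{(\lambda)}(x_1,x_2,\ldots)=\sum x_{i_1}^{\lambda_1}x_{i_2}^{\lambda_2}\cdots x_{i_l}^{\lambda_l}$, summed over all distinct monomials of this form with distinct indices $i_1,\ldots,i_l$. With $x_i=e^{-\beta\varepsilon_i}$, a term $m_{(\lambda)}$ counts microstates in which $\lambda_1$ particles occupy one single-particle state, $\lambda_2$ particles occupy another, and so on. The maximum occupation number is the largest number of particles that can occupy a single single-particle quantum state in some microstate counted by $\omega(E,N)$. *)

theory Defs
  imports Main "HOL-Library.Multiset"
begin

text \<open>An occupation configuration is a function
n :: nat => nat giving the number of particles in each single-particle state.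
The monomial x^n = prod_i x_i^(n i), with x_i = exp(-beta eps_i), is
the Boltzmann weight of a microstate with that configuration.\<close>

definition occ_support :: "(nat \<Rightarrow> nat) \<Rightarrow> nat set" where
  "occ_support n = {i. n i \<noteq> 0}"

definition occ_shape :: "(nat \<Rightarrow> nat) \<Rightarrow> nat multiset" where
  "occ_shape n = image_mset n (mset_set (occ_support n))"

definition is_partition :: "nat \<Rightarrow> nat multiset \<Rightarrow> bool" where
  "is_partition N lam \<longleftrightarrow> 0 \<notin># lam \<and> sum_mset lam = N"

definition largest_part :: "nat multiset \<Rightarrow> nat" where
  "largest_part lam = Max_mset lam"

text \<open>Monomial symmetric function m_lam in infinitely many variables, as a formal
power series: its coefficient at the monomial x^n.\<close>
definition msym_coeff :: "nat multiset \<Rightarrow> (nat \<Rightarrow> nat) \<Rightarrow> nat" where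
  "msym_coeff lam n = (if finite (occ_support n) \<and> occ_shape n = lam then 1 else 0)"

text \<open>A system is described by w, where w n is the number of microstates with
occupation configuration n.  Its canonical partition function is the formal series
Z = sum_n w n * x^n (= sum_E omega(E,N) e^(-beta E)); so its coefficient at x^n is w n.\<close>
definition Z_coeff :: "((nat \<Rightarrow> nat) \<Rightarrow> nat) \<Rightarrow> (nat \<Rightarrow> nat) \<Rightarrow> nat" where
  "Z_coeff w n = w n"

definition max_occupation :: "((nat \<Rightarrow> nat) \<Rightarrow> nat) \<Rightarrow> nat" where
  "max_occupation w = Max {n i | n i. w n > 0}"

end

theory Submission
  imports Defs
begin

lemma occ_le_max:
  assumes "finite (occ_support n)"
  shows "n i \<le> Max_mset (occ_shape n)"
proof (cases "n i = 0")
  case False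
  hence "i \<in> occ_support n" by (simp add: occ_support_def)
  hence "n i \<in># occ_shape n" using assms by (simp add: occ_shape_def)
  thus ?thesis by (intro Max_ge) auto
qed simp

lemma shape_of_list:
  assumes "0 \<notin> set xs"
  defines "n \<equiv> (\<lambda>i. if i < length xs then xs ! i else 0)"
  shows "occ_support n = {..<length xs}" "occ_shape n = mset xs"
proof -
  show s: "occ_support n = {..<length xs}"
    using assms by (auto simp: occ_support_def n_def) (metis gr0I nth_mem)
  have "occ_shape n = image_mset n (mset [0..<length xs])"
    by (simp add: occ_shape_def s mset_set_upto_eq_mset_upto)
  also have "\<dots> = mset (map n [0..<length xs])" by simp
  also have "map n [0..<length xs] = xs"
    by (rule nth_equalityI) (auto simp: n_def)
  finally show "occ_shape n = mset xs" .
qed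

theorem theorem2:
  fixes w :: "(nat \<Rightarrow> nat) \<Rightarrow> nat"
    and N q :: nat
    and lam :: "nat multiset"
    and M :: "nat multiset \<Rightarrow> nat"
  assumes lam_part: "is_partition N lam"
    and lam_ne: "lam \<noteq> {#}"
    and lam_q: "largest_part lam = q"
    and Z_expansion: "\<forall>n. Z_coeff w n =
        msym_coeff lam n
        + (\<Sum>mu \<in> {mu. is_partition N mu \<and> mu \<noteq> {#} \<and> largest_part mu \<le> q}.
             M mu * msym_coeff mu n)"
  shows "max_occupation w = q"
proof -
  let ?S = "{n i | n i. w n > 0}"
  have bound: "x \<le> q" if "x \<in> ?S" for x
  proof -
    obtain n i where x: "x = n i" and wp: "w n > 0" using \<open>x \<in> ?S\<close> by blast
    have eq: "w n = msym_coeff lam n + (\<Sum>mu \<in> {mu. is_partition N mu \<and> mu \<noteq> {#} \<and> largest_part mu \<le> q}.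
             M mu * msym_coeff mu n)"
      using Z_expansion by (simp add: Z_coeff_def)
    have "\<exists>mu. largest_part mu \<le> q \<and> finite (occ_support n) \<and> occ_shape n = mu"
    proof (cases "msym_coeff lam n = 0")
      case False
      thus ?thesis using lam_q by (auto simp: msym_coeff_def split: if_splits)
    next
      case True
      hence "(\<Sum>mu \<in> {mu. is_partition N mu \<and> mu \<noteq> {#} \<and> largest_part mu \<le> q}.
             M mu * msym_coeff mu n) \<noteq> 0" using eq wp by simp
      then obtain mu where "mu \<in> {mu. is_partition N mu \<and> mu \<noteq> {#} \<and> largest_part mu \<le> q}"
        and "M mu * msym_coeff mu n \<noteq> 0"
        by (meson sum.not_neutral_contains_not_neutral)
      thus ?thesis by (auto simp: msym_coeff_def split: if_splits)
    qed
    then obtain mu where "largest_part mu \<le> q" "finite (occ_support n)" "occ_shape n = mu" by blast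
    thus ?thesis using occ_le_max[of n i] x by (simp add: largest_part_def)
  qed
  obtain xs where xs: "mset xs = lam" using ex_mset by blast
  have z: "0 \<notin> set xs" using lam_part xs by (auto simp: is_partition_def)
  define n where "n \<equiv> (\<lambda>i. if i < length xs then xs ! i else 0)"
  have sup: "occ_support n = {..<length xs}" and sh: "occ_shape n = lam"
    using shape_of_list[OF z] xs by (simp_all add: n_def)
  have "msym_coeff lam n = 1" by (simp add: msym_coeff_def sup sh)
  hence wn: "w n > 0" using Z_expansion by (simp add: Z_coeff_def)
  have "q \<in># lam" using lam_q lam_ne Max_in_mset[of lam] by (simp add: largest_part_def)
  then obtain i where "i < length xs" "xs ! i = q" using xs by (metis in_set_conv_nth set_mset_mset)
  hence "n i = q" by (simp add: n_def)
  hence qS: "q \<in> ?S" using wn by blast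
  have fin: "finite ?S" using bound by (meson finite_atMost subsetI atMost_iff finite_subset)
  show ?thesis unfolding max_occupation_def
    using qS bound fin by (intro antisym Max_ge Max.boundedI) auto
qed

end
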